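(* Let $P$ be a simple $d$-dimensional $k$-template and let $\kappa\ge\aleph_0$ be a cardinal. If $X$ is a set with $|X|\le\kappa^{+(d-1)}$, then $\chi(L(X^d,P))\le\kappa$.
   Context: Here $1\le d<\omega$, $2\le k<\omega$. A $d$-dimensional $k$-template is a set $P$ of $d$-tuples with $|P|=k$. $P$ is simple if for every $m<d$ there are $x,y\in P$ such that for all $i<d$, $x_i=y_i$ iff $i\neq m$. If $P,Q$ are $d$-dimensional templates, $Q$ is a homomorphic image of $P$ if there is a surjection $f:P\to Q$ such that for all $x,y\in P$ and $i<d$, $x_i=y_i$ implies $f(x)_i=f(y)_i$. $L(X^d,P)$ is the $k$-hypergraph with vertex set $X^d$ whose edges are the $k$-templates $Q\subseteq X^d$ that are homomorphic images of $P$. $\chi$ is the chromatic number (least cardinal number of colors in a vertex coloring not constant on any edge). $\kappa^+$ is the successor cardinal, $\kappa^{+0}=\kappa$, $\kappa^{+(n+1)}=(\kappa^{+n})^+$. *)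

theory Defs
  imports Main
begin

unbundle cardinal_syntax

text \<open>d-tuples are represented as lists of length d; coordinate i is xs ! i.\<close>

definition tuples :: "'a set \<Rightarrow> nat \<Rightarrow> 'a list set" where
  "tuples X d = {xs. length xs = d \<and> set xs \<subseteq> X}"

definition is_template :: "nat \<Rightarrow> nat \<Rightarrow> 'b list set \<Rightarrow> bool" where
  "is_template d k P \<longleftrightarrow> finite P \<and> card P = k \<and> (\<forall>x\<in>P. length x = d)"

definition simple_template :: "nat \<Rightarrow> 'b list set \<Rightarrow> bool" where
  "simple_template d P \<longleftrightarrow>
     (\<forall>m<d. \<exists>x\<in>P. \<exists>y\<in>P. \<forall>i<d. (x ! i = y ! i \<longleftrightarrow> i \<noteq> m))"

definition hom_image :: "nat \<Rightarrow> 'b list set \<Rightarrow> 'a list set \<Rightarrow> bool" where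
  "hom_image d P Q \<longleftrightarrow>
     (\<exists>f. f ` P = Q \<and>
          (\<forall>x\<in>P. \<forall>y\<in>P. \<forall>i<d. x ! i = y ! i \<longrightarrow> f x ! i = f y ! i))"

definition L_edges :: "'a set \<Rightarrow> nat \<Rightarrow> 'b list set \<Rightarrow> 'a list set set" where
  "L_edges X d P = {Q. Q \<subseteq> tuples X d \<and> is_template d (card P) Q \<and> hom_image d P Q}"

definition chromatic_le :: "'v set \<Rightarrow> 'v set set \<Rightarrow> 'c set \<Rightarrow> bool" where
  "chromatic_le V E C \<longleftrightarrow>
     (\<exists>c. c ` V \<subseteq> C \<and> (\<forall>Q\<in>E. \<not> (\<exists>col. \<forall>q\<in>Q. c q = col)))"

inductive is_csucc_iter :: "'k rel \<Rightarrow> nat \<Rightarrow> 'c rel \<Rightarrow> bool" where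
  base: "r =o \<kappa> \<Longrightarrow> is_csucc_iter \<kappa> 0 r"
| step: "is_csucc_iter \<kappa> n s \<Longrightarrow> r =o cardSuc s \<Longrightarrow> is_csucc_iter \<kappa> (Suc n) r"

end

theory Submission
  imports Defs
begin

lemma csucc_card:
  assumes "is_csucc_iter \<kappa> n s" "\<kappa> = |K|"
  shows "Card_order s \<and> |K| \<le>o s"
  using assms
proof (induction rule: is_csucc_iter.induct)
  case (base r \<kappa>)
  then show ?case
    using Card_order_ordIso[OF card_of_Card_order] ordIso_imp_ordLeq ordIso_symmetric by blast
next
  case (step \<kappa> n s r)
  then have cs: "Card_order s" and ks: "|K| \<le>o s" by auto
  have c1: "Card_order (cardSuc s)" using cs cardSuc_Card_order by blast
  have "Card_order r" using Card_order_ordIso[OF c1 step.hyps(2)] .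
  moreover have "|K| \<le>o r"
    using ordLeq_transitive[OF ks ordLeq_transitive[OF cardSuc_ordLeq[OF cs]
          ordIso_imp_ordLeq[OF ordIso_symmetric[OF step.hyps(2)]]]] .
  ultimately show ?case by blast
qed

lemma under_less:
  assumes W: "Card_order W" and inf: "infinite (Field W)" and a: "a \<in> Field W"
  shows "|under W a| <o W"
proof -
  obtain b where b: "b \<in> Field W" "a \<noteq> b" "(a, b) \<in> W"
    using infinite_Card_order_limit[OF W inf a] by blast
  have wo: "Well_order W" using W card_order_on_well_order_on by blast
  hence tr: "trans W" and an: "antisym W"
    unfolding well_order_on_def linear_order_on_def partial_order_on_def preorder_on_def
    by auto
  have "under W a \<subseteq> underS W b"
  proof
    fix x assume "x \<in> under W a"
    hence xa: "(x, a) \<in> W" unfolding under_def by auto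
    hence xb: "(x, b) \<in> W" using b(3) tr unfolding trans_def by blast
    have "x \<noteq> b"
    proof
      assume "x = b"
      with xa b(3) an show False using b(2) unfolding antisym_def by blast
    qed
    thus "x \<in> underS W b" using xb unfolding underS_def by auto
  qed
  hence "|under W a| \<le>o |underS W b|" by (rule card_of_mono1)
  also have "|underS W b| <o W" using card_of_underS[OF W b(1)] .
  finally show ?thesis .
qed

lemma finite_max:
  assumes wo: "Well_order W" and fin: "finite S" and ne: "S \<noteq> {}" and sub: "S \<subseteq> Field W"
  shows "\<exists>a\<in>S. \<forall>b\<in>S. (b, a) \<in> W"
  using fin ne sub
proof (induction S rule: finite_ne_induct)
  case (singleton x)
  have "Refl W" using wo unfolding well_order_on_def linear_order_on_def partial_order_on_def preorder_on_def by auto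
  then show ?case using singleton unfolding refl_on_def by auto
next
  case (insert x F)
  have tot: "Total W" and rf: "Refl W" and tr: "trans W"
    using wo unfolding well_order_on_def linear_order_on_def partial_order_on_def preorder_on_def by auto
  obtain a where a: "a \<in> F" "\<forall>b\<in>F. (b, a) \<in> W" using insert by auto
  have xF: "x \<in> Field W" "a \<in> Field W" using insert a by auto
  show ?case
  proof (cases "(x, a) \<in> W")
    case True then show ?thesis using a by auto
  next
    case False
    hence "(a, x) \<in> W" using tot xF rf unfolding total_on_def refl_on_def by metis
    hence "\<forall>b\<in>insert x F. (b, x) \<in> W" using a tr rf xF unfolding trans_def refl_on_def by blast
    then show ?thesis by auto
  qed
qed

definition good :: "'a set \<Rightarrow> nat \<Rightarrow> 'k set \<Rightarrow> ('a list \<Rightarrow> nat \<times> 'k) \<Rightarrow> bool" where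
  "good X d K c \<longleftrightarrow> (\<forall>x\<in>tuples X d. fst (c x) < d \<and> snd (c x) \<in> K) \<and>
     (\<forall>x\<in>tuples X d. \<forall>y\<in>tuples X d. \<forall>m<d. (\<forall>i<d. x!i = y!i \<longleftrightarrow> i \<noteq> m) \<longrightarrow> c x = c y \<longrightarrow> fst (c x) \<noteq> m)"

definition adj :: "nat \<Rightarrow> nat \<Rightarrow> nat" where
  "adj j i = (if i < j then i else Suc i)"

definition rem :: "nat \<Rightarrow> 'a list \<Rightarrow> 'a list" where
  "rem j x = take j x @ drop (Suc j) x"

lemma rem_len: "j < length x \<Longrightarrow> length (rem j x) = length x - 1"
  unfolding rem_def by auto

lemma rem_nth: "j < length x \<Longrightarrow> i < length x - 1 \<Longrightarrow> rem j x ! i = x ! adj j i"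
  unfolding rem_def adj_def by (auto simp: nth_append min_def)

lemma adj_ne: "adj j i \<noteq> j" unfolding adj_def by auto
lemma adj_inj: "adj j i = adj j i' \<Longrightarrow> i = i'" unfolding adj_def by (auto split: if_splits)


lemma step_color:
  fixes X :: "'a set" and h :: "'a \<Rightarrow> 'w" and W :: "'w rel" and K :: "'k set"
  assumes wo: "Well_order W" and h: "h ` X \<subseteq> Field W"
    and IH: "\<forall>a\<in>X. \<exists>c. good {b\<in>X. (h b, h a) \<in> W} (Suc n) K c"
  shows "\<exists>c. good X (Suc (Suc n)) K c"
proof -
  have tr: "trans W"
    using wo unfolding well_order_on_def linear_order_on_def partial_order_on_def preorder_on_def by auto
  define ismax where "ismax x j \<longleftrightarrow> j < length x \<and> (\<forall>i<length x. (h (x!i), h (x!j)) \<in> W)" for x :: "'a list" and j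
  define J where "J x = (LEAST j. ismax x j)" for x
  define T where "T a = {b\<in>X. (h b, h a) \<in> W}" for a
  obtain C where C: "\<forall>a\<in>X. good (T a) (Suc n) K (C a)"
    using IH unfolding T_def by metis
  define c where "c x = (let j = J x; p = C (x!J x) (rem (J x) x) in (adj j (fst p), snd p))" for x
  have exJ: "ismax x (J x)" if x: "x \<in> tuples X (Suc (Suc n))" for x
  proof -
    have lx: "length x = Suc (Suc n)" and sx: "set x \<subseteq> X" using x unfolding tuples_def by auto
    have "\<exists>a\<in>h ` set x. \<forall>b\<in>h ` set x. (b, a) \<in> W"
      by (rule finite_max[OF wo]) (use lx sx h in auto)
    then obtain j where j: "j < length x" "\<forall>i<length x. (h (x!i), h (x!j)) \<in> W"
      by (auto simp: in_set_conv_nth) (metis nth_mem)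
    hence "ismax x j" unfolding ismax_def by auto
    thus ?thesis unfolding J_def by (rule LeastI)
  qed
  have Jle: "ismax x j \<Longrightarrow> J x \<le> j" for x j unfolding J_def by (rule Least_le)
  have remT: "rem (J x) x \<in> tuples (T (x ! J x)) (Suc n)" and xJ: "x ! J x \<in> X"
    if x: "x \<in> tuples X (Suc (Suc n))" for x
  proof -
    have lx: "length x = Suc (Suc n)" and sx: "set x \<subseteq> X" using x unfolding tuples_def by auto
    have m: "ismax x (J x)" using exJ[OF x] .
    hence jl: "J x < length x" unfolding ismax_def by auto
    show "x ! J x \<in> X" using jl sx nth_mem by blast
    have "rem (J x) x ! i \<in> T (x ! J x)" if i: "i < length (rem (J x) x)" for i
    proof -
      have i': "i < length x - 1" using i rem_len[OF jl] by simp
      have a: "adj (J x) i < length x" using i' unfolding adj_def by auto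
      show ?thesis unfolding rem_nth[OF jl i'] T_def using a m sx nth_mem unfolding ismax_def by blast
    qed
    thus "rem (J x) x \<in> tuples (T (x ! J x)) (Suc n)"
      unfolding tuples_def using rem_len[OF jl] lx by (auto simp: in_set_conv_nth)
  qed
  have "good X (Suc (Suc n)) K c"
    unfolding good_def
  proof (intro conjI ballI allI impI)
    fix x assume x: "x \<in> tuples X (Suc (Suc n))"
    have g: "good (T (x ! J x)) (Suc n) K (C (x ! J x))" using C xJ[OF x] by blast
    have "fst (C (x ! J x) (rem (J x) x)) < Suc n \<and> snd (C (x ! J x) (rem (J x) x)) \<in> K"
      using g remT[OF x] unfolding good_def by blast
    thus "fst (c x) < Suc (Suc n)" "snd (c x) \<in> K"
      unfolding c_def adj_def Let_def by auto
  next
    fix x y m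
    assume x: "x \<in> tuples X (Suc (Suc n))" and y: "y \<in> tuples X (Suc (Suc n))"
      and m: "m < Suc (Suc n)" and dif: "\<forall>i<Suc (Suc n). (x!i = y!i) = (i \<noteq> m)"
      and eq: "c x = c y"
    show "fst (c x) \<noteq> m"
    proof
      assume fm: "fst (c x) = m"
      have lx: "length x = Suc (Suc n)" and ly: "length y = Suc (Suc n)"
        using x y unfolding tuples_def by auto
      define j where "j = J x"
      define j' where "j' = J y"
      have mx: "ismax x j" and my: "ismax y j'" using exJ x y j_def j'_def by auto
      have jm: "j \<noteq> m" using fm adj_ne unfolding c_def Let_def j_def by (metis fst_conv)
      have jm': "j' \<noteq> m" using fm eq adj_ne unfolding c_def Let_def j'_def by (metis fst_conv)
      have "ismax y j"
        unfolding ismax_def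
      proof (intro conjI allI impI)
        show "j < length y" using mx lx ly unfolding ismax_def by auto
        fix i assume i: "i < length y"
        show "(h (y!i), h (y!j)) \<in> W"
        proof (cases "i = m")
          case True
          have "(h (y!i), h (y!j')) \<in> W" using my i unfolding ismax_def by auto
          moreover have "y!j' = x!j'" using dif jm' my ly unfolding ismax_def by auto
          moreover have "(h (x!j'), h (x!j)) \<in> W" using mx my lx ly unfolding ismax_def by auto
          moreover have "y!j = x!j" using dif jm mx lx unfolding ismax_def by auto
          ultimately show ?thesis using tr unfolding trans_def by metis
        next
          case False
          hence "y!i = x!i" using dif i ly by auto
          moreover have "y!j = x!j" using dif jm mx lx unfolding ismax_def by auto
          ultimately show ?thesis using mx i lx ly unfolding ismax_def by auto
        qed
      qed
      moreover have "ismax x j'"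
        unfolding ismax_def
      proof (intro conjI allI impI)
        show "j' < length x" using my lx ly unfolding ismax_def by auto
        fix i assume i: "i < length x"
        show "(h (x!i), h (x!j')) \<in> W"
        proof (cases "i = m")
          case True
          have "(h (x!i), h (x!j)) \<in> W" using mx i unfolding ismax_def by auto
          moreover have "x!j = y!j" using dif jm mx lx unfolding ismax_def by auto
          moreover have "(h (y!j), h (y!j')) \<in> W" using mx my lx ly unfolding ismax_def by auto
          moreover have "x!j' = y!j'" using dif jm' my ly unfolding ismax_def by auto
          ultimately show ?thesis using tr unfolding trans_def by metis
        next
          case False
          hence "x!i = y!i" using dif i lx by auto
          moreover have "x!j' = y!j'" using dif jm' my ly unfolding ismax_def by auto
          ultimately show ?thesis using my i lx ly unfolding ismax_def by auto
        qed
      qed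
      ultimately have jj: "j = j'" using Jle j_def j'_def by (metis le_antisym)
      have jl: "j < Suc (Suc n)" using mx lx unfolding ismax_def by auto
      define a where "a = x ! j"
      have ay: "y ! j = a" using dif jm jl a_def by auto
      define p where "p = C a (rem j x)"
      define q where "q = C a (rem j y)"
      have cx: "c x = (adj j (fst p), snd p)" unfolding c_def Let_def p_def a_def j_def by simp
      have cy: "c y = (adj j (fst q), snd q)" unfolding c_def Let_def q_def ay[symmetric] jj j'_def by simp
      have pq: "p = q" using eq cx cy adj_inj by (metis prod.inject prod_eqI)
      define m' where "m' = (if m < j then m else m - 1)"
      have am: "adj j m' = m" using jm unfolding m'_def adj_def by auto
      have m'l: "m' < Suc n" using m jm jl unfolding m'_def by auto
      have "adj j (fst p) = adj j m'" using fm cx am by simp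
      hence fp: "fst p = m'" using adj_inj by blast
      have g: "good (T a) (Suc n) K (C a)" using C xJ[OF x] a_def j_def by blast
      have rx: "rem j x \<in> tuples (T a) (Suc n)" using remT[OF x] a_def j_def by simp
      have ry: "rem j y \<in> tuples (T a) (Suc n)" using remT[OF y] ay j'_def jj by simp
      have d2: "\<forall>i<Suc n. (rem j x ! i = rem j y ! i) = (i \<noteq> m')"
      proof (intro allI impI)
        fix i assume i: "i < Suc n"
        have ai: "adj j i < Suc (Suc n)" using i unfolding adj_def by auto
        have "rem j x ! i = x ! adj j i" using rem_nth[of j x i] jl lx i by auto
        moreover have "rem j y ! i = y ! adj j i" using rem_nth[of j y i] jl ly i by auto
        ultimately have "(rem j x ! i = rem j y ! i) = (adj j i \<noteq> m)" using dif ai by auto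
        also have "\<dots> = (i \<noteq> m')" using am adj_inj by metis
        finally show "(rem j x ! i = rem j y ! i) = (i \<noteq> m')" .
      qed
      show False using g rx ry m'l d2 pq fp unfolding good_def p_def q_def by blast
    qed
  qed
  thus ?thesis by blast
qed


lemma main_color:
  fixes K :: "'k set" and s :: "'c rel"
  assumes "is_csucc_iter \<kappa> n s" "\<kappa> = |K|" "infinite K"
  shows "\<forall>X::'a set. |X| \<le>o s \<longrightarrow> (\<exists>c. good X (Suc n) K c)"
  using assms
proof (induction rule: is_csucc_iter.induct)
  case (base r \<kappa>)
  show ?case
  proof (intro allI impI)
    fix X :: "'a set" assume X0: "|X| \<le>o r"
    have "|X| \<le>o \<kappa>" by (rule ordLeq_ordIso_trans[OF X0 base.hyps])
    hence "|X| \<le>o |K|" using base.prems(1) by simp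
    hence "\<exists>f. inj_on f X \<and> f ` X \<subseteq> K" by (rule iffD2[OF card_of_ordLeq])
    then obtain f where "inj_on f X \<and> f ` X \<subseteq> K" by (elim exE)
    hence f: "inj_on f X" "f ` X \<subseteq> K" by auto
    define c where "c x = (0::nat, f (x!0))" for x :: "'a list"
    have "good X (Suc 0) K c"
      unfolding good_def
    proof (intro conjI ballI allI impI)
      fix x assume x: "x \<in> tuples X (Suc 0)"
      hence "x!0 \<in> X" unfolding tuples_def by auto
      thus "fst (c x) < Suc 0" "snd (c x) \<in> K" using f unfolding c_def by auto
    next
      fix x y m assume x: "x \<in> tuples X (Suc 0)" and y: "y \<in> tuples X (Suc 0)"
        and m: "m < Suc 0" and d: "\<forall>i<Suc 0. (x!i = y!i) = (i \<noteq> m)" and e: "c x = c y"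
      have "x!0 \<in> X" "y!0 \<in> X" using x y unfolding tuples_def by auto
      moreover have "f (x!0) = f (y!0)" using e unfolding c_def by auto
      ultimately have "x!0 = y!0" using inj_onD[OF f(1)] by blast
      thus "fst (c x) \<noteq> m" using d m by auto
    qed
    thus "\<exists>c. good X (Suc 0) K c" by blast
  qed
next
  case (step \<kappa> n s r)
  have cks: "Card_order s \<and> |K| \<le>o s" by (rule csucc_card[OF step.hyps(1) step.prems(1)])
  have cs: "Card_order s" using cks by (rule conjunct1)
  have ks: "|K| \<le>o s" using cks by (rule conjunct2)
  define W where "W = cardSuc s"
  have cW: "Card_order W" unfolding W_def by (rule cardSuc_Card_order[OF cs])
  have wo: "Well_order W" using card_order_on_well_order_on[OF cW] .
  have FW: "|Field W| =o W" using card_of_Field_ordIso[OF cW] .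
  have KW0: "|K| \<le>o W" using ordLeq_transitive[OF ks cardSuc_ordLeq[OF cs]] unfolding W_def .
  have KW: "|K| \<le>o |Field W|" using ordLeq_ordIso_trans[OF KW0 ordIso_symmetric[OF FW]] .
  have infW: "infinite (Field W)"
    using card_of_ordLeq_infinite[OF KW step.prems(2)] .
  have IH: "\<forall>X::'a set. |X| \<le>o s \<longrightarrow> (\<exists>c. good X (Suc n) K c)" using step.IH[OF step.prems] .
  show ?case
  proof (intro allI impI)
    fix X :: "'a set" assume X: "|X| \<le>o r"
    have "|X| \<le>o W" using ordLeq_ordIso_trans[OF X step.hyps(2)] unfolding W_def .
    hence "|X| \<le>o |Field W|" by (rule ordLeq_ordIso_trans[OF _ ordIso_symmetric[OF FW]])
    hence "\<exists>h. inj_on h X \<and> h ` X \<subseteq> Field W" by (rule iffD2[OF card_of_ordLeq])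
    then obtain h where "inj_on h X \<and> h ` X \<subseteq> Field W" by (elim exE)
    hence h: "inj_on h X" "h ` X \<subseteq> Field W" by auto
    have "\<forall>a\<in>X. \<exists>c. good {b\<in>X. (h b, h a) \<in> W} (Suc n) K c"
    proof
      fix a assume a: "a \<in> X"
      let ?T = "{b\<in>X. (h b, h a) \<in> W}"
      have "inj_on h ?T" using h(1) by (rule inj_on_subset) auto
      moreover have "h ` ?T \<subseteq> under W (h a)" unfolding under_def by auto
      ultimately have "inj_on h ?T \<and> h ` ?T \<subseteq> under W (h a)" by blast
      hence "\<exists>f. inj_on f ?T \<and> f ` ?T \<subseteq> under W (h a)" by blast
      hence "|?T| \<le>o |under W (h a)|" by (rule iffD1[OF card_of_ordLeq])
      moreover have "|under W (h a)| <o W" using under_less[OF cW infW] h(2) a by blast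
      ultimately have "|?T| <o cardSuc s" unfolding W_def by (rule ordLeq_ordLess_trans)
      hence "|?T| \<le>o s" using cardSuc_ordLeq_ordLess[OF cs card_of_Card_order[of ?T]] by simp
      thus "\<exists>c. good ?T (Suc n) K c" using IH by simp
    qed
    thus "\<exists>c. good X (Suc (Suc n)) K c" by (rule step_color[OF wo h(2)])
  qed
qed

theorem lemma1p4:
  fixes d k :: nat and P :: "'b list set" and K :: "'k set" and X :: "'a set"
    and r :: "'c rel"
  assumes "1 \<le> d" and "2 \<le> k"
    and "is_template d k P" and "simple_template d P"
    and "infinite K"
    and "is_csucc_iter (card_of K) (d - 1) r"
    and "(card_of X, r) \<in> ordLeq"
  shows "chromatic_le (tuples X d) (L_edges X d P) K"
proof -
  have dS: "Suc (d - 1) = d" using assms(1) by simp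
  have "\<exists>c. good X (Suc (d - 1)) K c"
    using main_color[OF assms(6) refl assms(5)] assms(7) by blast
  then obtain c where c: "good X d K c" using dS by auto
  have "|UNIV::nat set| \<le>o |K|" using assms(5) infinite_iff_card_of_nat by auto
  hence "|(UNIV::nat set) \<times> K| =o |K|" using card_of_Times_infinite[OF assms(5)] by auto
  hence "|(UNIV::nat set) \<times> K| \<le>o |K|" by (rule ordIso_imp_ordLeq)
  hence "\<exists>g. inj_on g ((UNIV::nat set) \<times> K) \<and> g ` ((UNIV::nat set) \<times> K) \<subseteq> K"
    by (rule iffD2[OF card_of_ordLeq])
  then obtain g where "inj_on g ((UNIV::nat set) \<times> K) \<and> g ` ((UNIV::nat set) \<times> K) \<subseteq> K"
    by (elim exE)
  hence g: "inj_on g ((UNIV::nat set) \<times> K)" "g ` ((UNIV::nat set) \<times> K) \<subseteq> K" by auto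
  have c1: "\<And>x. x \<in> tuples X d \<Longrightarrow> fst (c x) < d \<and> snd (c x) \<in> K"
    and c2: "\<And>x y m. x \<in> tuples X d \<Longrightarrow> y \<in> tuples X d \<Longrightarrow> m < d \<Longrightarrow>
          (\<forall>i<d. x!i = y!i \<longleftrightarrow> i \<noteq> m) \<Longrightarrow> c x = c y \<Longrightarrow> fst (c x) \<noteq> m"
    using c unfolding good_def by blast+
  have cin: "c x \<in> (UNIV::nat set) \<times> K" if "x \<in> tuples X d" for x
    using c1[OF that] by (simp add: mem_Times_iff)
  show ?thesis
    unfolding chromatic_le_def
  proof (intro exI conjI ballI notI)
    show "(g \<circ> c) ` tuples X d \<subseteq> K" using cin g(2) by auto
  next
    fix Q assume Q: "Q \<in> L_edges X d P" and "\<exists>col. \<forall>q\<in>Q. (g \<circ> c) q = col"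
    then obtain col where col: "\<forall>q\<in>Q. g (c q) = col" by auto
    have QT: "Q \<subseteq> tuples X d" and tQ: "is_template d (card P) Q" and hQ: "hom_image d P Q"
      using Q unfolding L_edges_def by auto
    have Pf: "finite P" "card P = k" using assms(3) unfolding is_template_def by auto
    have Qc: "finite Q" "card Q = k" using tQ Pf unfolding is_template_def by auto
    obtain f where f: "f ` P = Q" "\<forall>x\<in>P. \<forall>y\<in>P. \<forall>i<d. x ! i = y ! i \<longrightarrow> f x ! i = f y ! i"
      using hQ unfolding hom_image_def by blast
    have finj: "inj_on f P" using f(1) Pf Qc by (simp add: inj_on_iff_eq_card)
    have "Q \<noteq> {}" using Qc assms(2) by auto
    then obtain q0 where q0: "q0 \<in> Q" by auto
    define m where "m = fst (c q0)"
    have "q0 \<in> tuples X d" using QT q0 by (rule subsetD)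
    hence md: "m < d" using c1 unfolding m_def by blast
    have "\<forall>m<d. \<exists>x\<in>P. \<exists>y\<in>P. \<forall>i<d. (x ! i = y ! i) = (i \<noteq> m)"
      using assms(4) unfolding simple_template_def .
    hence "\<exists>x\<in>P. \<exists>y\<in>P. \<forall>i<d. (x ! i = y ! i) = (i \<noteq> m)" using md by (elim allE impE)
    then obtain x y where xy: "x \<in> P" "y \<in> P" "\<forall>i<d. (x ! i = y ! i) = (i \<noteq> m)"
      by (elim bexE)
    have fxQ: "f x \<in> Q" "f y \<in> Q" using f(1) xy by auto
    hence fxT: "f x \<in> tuples X d" "f y \<in> tuples X d" using QT by auto
    have lens: "length (f x) = d" "length (f y) = d" using fxT unfolding tuples_def by auto
    have cc: "c q = c q0" if "q \<in> Q" for q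
    proof -
      have "g (c q) = col" using col that by (rule bspec)
      moreover have "g (c q0) = col" using col q0 by (rule bspec)
      ultimately have gg: "g (c q) = g (c q0)" by simp
      have "q \<in> tuples X d" using QT that by (rule subsetD)
      hence i1: "c q \<in> (UNIV::nat set) \<times> K" by (rule cin)
      have "q0 \<in> tuples X d" using QT q0 by (rule subsetD)
      hence i2: "c q0 \<in> (UNIV::nat set) \<times> K" by (rule cin)
      show ?thesis by (rule inj_onD[OF g(1) gg i1 i2])
    qed
    have dif: "\<forall>i<d. (f x ! i = f y ! i) = (i \<noteq> m)"
    proof (intro allI impI)
      fix i assume i: "i < d"
      show "(f x ! i = f y ! i) = (i \<noteq> m)"
      proof (cases "i = m")
        case True
        have "f x ! m \<noteq> f y ! m"
        proof
          assume e: "f x ! m = f y ! m"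
          have "f x = f y"
          proof (rule nth_equalityI)
            show "length (f x) = length (f y)" using lens by simp
            fix j assume "j < length (f x)"
            hence jd: "j < d" using lens by simp
            show "f x ! j = f y ! j"
            proof (cases "j = m")
              case True thus ?thesis using e by simp
            next
              case False
              have "(x ! j = y ! j) = (j \<noteq> m)" using xy(3) jd by simp
              hence "x ! j = y ! j" using False by simp
              thus ?thesis by (rule f(2)[rule_format, OF xy(1) xy(2) jd])
            qed
          qed
          hence "x = y" by (rule inj_onD[OF finj _ xy(1) xy(2)])
          moreover have "(x ! m = y ! m) = (m \<noteq> m)" using xy(3) md by simp
          ultimately show False by simp
        qed
        thus ?thesis using True by simp
      next
        case False
        have "(x ! i = y ! i) = (i \<noteq> m)" using xy(3) i by simp
        hence "x ! i = y ! i" using False by simp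
        hence "f x ! i = f y ! i" by (rule f(2)[rule_format, OF xy(1) xy(2) i])
        thus ?thesis using False by simp
      qed
    qed
    have e1: "c (f x) = c q0" by (rule cc[OF fxQ(1)])
    have e2: "c (f y) = c q0" by (rule cc[OF fxQ(2)])
    have "fst (c (f x)) \<noteq> m" by (rule c2[OF fxT md dif]) (simp add: e1 e2)
    thus False using e1 m_def by simp
  qed
qed

end
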